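(* Let $\mathcal{Q}\subset\mathbb{R}^n$ be compact and let $(\mathcal{E},\mathcal{D})$ be a compression code for $\mathcal{Q}$ operating at rate $r$ and distortion $\delta$, with codebook $\mathcal{C}$. Let $\eta>1$ and let the number of measurements be $d=\eta r/\log_2(1/({\rm e}\delta))$. Let $A\in\mathbb{R}^{d\times n}$ have i.i.d. $\mathcal{N}(0,1)$ entries. For ${\bf x}_o\in\mathcal{Q}$, let $\hat{{\bf x}}_o$ be any element of $\arg\min_{{\bf c}\in\mathcal{C}}\|A{\bf x}_o-A{\bf c}\|_2^2$. Given $\epsilon>0$, suppose $\delta$ is such that $\frac{\eta}{\log\frac{1}{{\rm e}\delta}}<\epsilon$. Then for every ${\bf x}_o\in\mathcal{Q}$, \[ \mathbb{P}\big(\|\hat{{\bf x}}_o-{\bf x}_o\|_2\ge\theta\,\delta^{1-(1+\epsilon)/\eta}\big)\le{\rm e}^{-0.8d}+{\rm e}^{-0.3\epsilon r}, \] where $\theta=2{\rm e}^{-(1+\epsilon)/\eta}$.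
   Context: A compression code $(\mathcal{E},\mathcal{D})$ for $\mathcal{Q}$ at rate $r$ consists of an encoder $\mathcal{E}:\mathcal{Q}\to\{1,2,\dots,2^r\}$ and a decoder $\mathcal{D}:\{1,\dots,2^r\}\to\mathbb{R}^n$; its codebook is $\mathcal{C}=\{\mathcal{D}(\mathcal{E}({\bf x})):{\bf x}\in\mathcal{Q}\}$, and its distortion is $\delta=\sup_{{\bf x}\in\mathcal{Q}}\|{\bf x}-\mathcal{D}(\mathcal{E}({\bf x}))\|_2$. $\log$ is the natural logarithm, $\log_2$ the base-2 logarithm, ${\rm e}$ Euler's number. The probability is over $A$. *)

theory Defs
  imports "HOL-Probability.Probability"
begin

definition std_gauss :: "real measure" where
  "std_gauss = density lborel std_normal_density"

text \<open>Distribution of a d x n matrix with i.i.d. N(0,1) entries; a matrix is a function on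
  index pairs (i,j) with i < d (row) and j :: 'n (column), extensional outside.\<close>
definition gauss_matrix :: "nat \<Rightarrow> (nat \<times> 'n::finite \<Rightarrow> real) measure" where
  "gauss_matrix d = PiM ({..<d} \<times> UNIV) (\<lambda>_. std_gauss)"

definition mat_vec_norm :: "nat \<Rightarrow> (nat \<times> 'n::finite \<Rightarrow> real) \<Rightarrow> real ^ 'n \<Rightarrow> real" where
  "mat_vec_norm d A x = sqrt (\<Sum>i<d. (\<Sum>j\<in>UNIV. A (i, j) * x $ j)\<^sup>2)"

definition is_compression_code ::
  "(real ^ 'n) set \<Rightarrow> nat \<Rightarrow> (real ^ 'n \<Rightarrow> nat) \<Rightarrow> (nat \<Rightarrow> real ^ 'n) \<Rightarrow> bool" where
  "is_compression_code Q r E D \<longleftrightarrow> (\<forall>x\<in>Q. E x \<in> {1..2^r})"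

definition codebook :: "(real ^ 'n) set \<Rightarrow> (real ^ 'n \<Rightarrow> nat) \<Rightarrow> (nat \<Rightarrow> real ^ 'n) \<Rightarrow> (real ^ 'n) set" where
  "codebook Q E D = (\<lambda>x. D (E x)) ` Q"

definition distortion :: "(real ^ 'n) set \<Rightarrow> (real ^ 'n \<Rightarrow> nat) \<Rightarrow> (nat \<Rightarrow> real ^ 'n) \<Rightarrow> real" where
  "distortion Q E D = (SUP x\<in>Q. norm (x - D (E x)))"

definition argmin_set :: "nat \<Rightarrow> (nat \<times> 'n::finite \<Rightarrow> real) \<Rightarrow> (real ^ 'n) set \<Rightarrow> real ^ 'n \<Rightarrow> (real ^ 'n) set" where
  "argmin_set d A C xo = {c \<in> C. \<forall>c'\<in>C. (mat_vec_norm d A (xo - c))\<^sup>2 \<le> (mat_vec_norm d A (xo - c'))\<^sup>2}"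

end

theory Submission
  imports Defs
begin

lemma prob_space_std_gauss: "prob_space std_gauss"
  unfolding std_gauss_def by (rule prob_space_normal_density) simp

lemma sets_std_gauss[simp, measurable_cong]: "sets std_gauss = sets borel"
  unfolding std_gauss_def by simp

lemma space_std_gauss[simp]: "space std_gauss = UNIV"
  unfolding std_gauss_def by simp

lemma prob_space_gauss_matrix: "prob_space (gauss_matrix d)"
  unfolding gauss_matrix_def
  by (intro prob_space_PiM prob_space_std_gauss)

lemma sets_gauss_matrix: "sets (gauss_matrix d) = sets (PiM ({..<d} \<times> UNIV) (\<lambda>_. borel))"
  unfolding gauss_matrix_def by (intro sets_PiM_cong) auto

lemma indep_coords:
  fixes I :: "'i set"
  assumes fin: "finite I"
  shows "prob_space.indep_vars (PiM I (\<lambda>_. std_gauss)) (\<lambda>_. borel) (\<lambda>k A. A k) I"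
proof (cases "I = {}")
  case True
  interpret prob_space "PiM I (\<lambda>_. std_gauss)" by (intro prob_space_PiM prob_space_std_gauss)
  show ?thesis unfolding indep_vars_def indep_sets_def by (simp add: True)
next
  case False
  interpret P: prob_space "PiM I (\<lambda>_. std_gauss)" by (intro prob_space_PiM prob_space_std_gauss)
  have rv: "\<And>k. P.random_variable borel (\<lambda>A. A k)"
  proof -
    fix k
    show "P.random_variable borel (\<lambda>A. A k)"
    proof (cases "k \<in> I")
      case True then show ?thesis
        by (metis measurable_cong_sets measurable_component_singleton sets_std_gauss)
    next
      case False
      have "\<And>A. A \<in> space (PiM I (\<lambda>_. std_gauss)) \<Longrightarrow> A k = undefined"
        using False by (auto simp: space_PiM PiE_def extensional_def)
      then show ?thesis by (subst measurable_cong[where g="\<lambda>_. undefined"]) auto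
    qed
  qed
  have c: "distr (PiM I (\<lambda>_. std_gauss)) borel (\<lambda>A. A k) = std_gauss" if "k \<in> I" for k
  proof -
    have "distr (PiM I (\<lambda>_. std_gauss)) borel (\<lambda>A. A k) = distr (PiM I (\<lambda>_. std_gauss)) std_gauss (\<lambda>A. A k)"
      by (rule distr_cong) auto
    also have "\<dots> = std_gauss"
      by (rule distr_PiM_component) (auto simp: prob_space_std_gauss that)
    finally show ?thesis .
  qed
  show ?thesis
  proof (subst P.indep_vars_iff_distr_eq_PiM[OF False rv])
    have "distr (PiM I (\<lambda>_. std_gauss)) (PiM I (\<lambda>_. borel)) (\<lambda>x. \<lambda>i\<in>I. x i)
        = distr (PiM I (\<lambda>_. std_gauss)) (PiM I (\<lambda>_. borel)) (\<lambda>x. x)"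
      by (rule distr_cong) (auto simp: space_PiM)
    also have "\<dots> = PiM I (\<lambda>_. std_gauss)"
      by (rule distr_id2) (intro sets_PiM_cong, auto)
    also have "\<dots> = PiM I (\<lambda>k. distr (PiM I (\<lambda>_. std_gauss)) borel (\<lambda>A. A k))"
      by (rule PiM_cong) (auto simp: c)
    finally show "distr (PiM I (\<lambda>_. std_gauss)) (PiM I (\<lambda>_. borel)) (\<lambda>x. \<lambda>i\<in>I. x i)
        = PiM I (\<lambda>k. distr (PiM I (\<lambda>_. std_gauss)) borel (\<lambda>A. A k))" .
  qed
qed


lemma coord_distributed:
  fixes I :: "'i set"
  assumes that: "j \<in> I"
  shows "distributed (PiM I (\<lambda>_. std_gauss)) lborel (\<lambda>B. B j) std_normal_density"
proof -
  have "distr (PiM I (\<lambda>_. std_gauss)) lborel (\<lambda>B. B j) = distr (PiM I (\<lambda>_. std_gauss)) std_gauss (\<lambda>B. B j)"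
    by (rule distr_cong) auto
  also have "\<dots> = std_gauss"
    by (rule distr_PiM_component) (auto simp: prob_space_std_gauss that)
  finally have d: "distr (PiM I (\<lambda>_. std_gauss)) lborel (\<lambda>B. B j) = density lborel std_normal_density"
    by (simp add: std_gauss_def)
  have m: "(\<lambda>B. B j) \<in> measurable (PiM I (\<lambda>_. std_gauss)) lborel"
    by (metis measurable_cong_sets measurable_component_singleton sets_std_gauss sets_lborel that)
  show ?thesis unfolding distributed_def using d m by auto
qed

lemma col_sum_normal:
  fixes u :: "real ^ 'n"
  assumes "u \<noteq> 0"
  shows "distributed (PiM UNIV (\<lambda>_::'n. std_gauss)) lborel (\<lambda>B. \<Sum>j\<in>UNIV. B j * u $ j) (normal_density 0 (norm u))"
proof -
  interpret P: prob_space "PiM UNIV (\<lambda>_::'n. std_gauss)" by (intro prob_space_PiM prob_space_std_gauss)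
  define J where "J = {j. u $ j \<noteq> 0}"
  have fJ: "finite J" by simp
  have neJ: "J \<noteq> {}" using assms unfolding J_def by (auto simp: vec_eq_iff)
  have ind0: "P.indep_vars (\<lambda>_. borel) (\<lambda>k A. A k) (UNIV::'n set)"
    by (rule indep_coords) simp
  have ind: "P.indep_vars (\<lambda>_. borel) (\<lambda>j B. B j * u $ j) J"
    using P.indep_vars_compose2[OF P.indep_vars_subset[OF ind0], of J "\<lambda>j a. a * u $ j" "\<lambda>_. borel"]
    by auto
  have dist: "distributed (PiM UNIV (\<lambda>_::'n. std_gauss)) lborel (\<lambda>B. B j * u $ j) (normal_density 0 (\<bar>u $ j\<bar>))"
    if "j \<in> J" for j
  proof -
    have "distributed (PiM UNIV (\<lambda>_::'n. std_gauss)) lborel (\<lambda>B. 0 + u $ j * B j)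
        (normal_density (0 + u $ j * 0) (\<bar>u $ j\<bar> * 1))"
      by (rule P.normal_density_affine[OF coord_distributed]) (use that in \<open>auto simp: J_def\<close>)
    then show ?thesis by (simp add: mult.commute)
  qed
  have "distributed (PiM UNIV (\<lambda>_::'n. std_gauss)) lborel (\<lambda>B. \<Sum>j\<in>J. B j * u $ j)
      (normal_density (\<Sum>j\<in>J. 0) (sqrt (\<Sum>j\<in>J. \<bar>u $ j\<bar>\<^sup>2)))"
    by (rule P.sum_indep_normal[OF fJ neJ ind]) (auto simp: J_def dist)
  moreover have "(\<lambda>B. \<Sum>j\<in>J. B j * u $ j) = (\<lambda>B. \<Sum>j\<in>UNIV. B j * u $ j)"
    by (rule ext, rule sum.mono_neutral_left) (auto simp: J_def)
  moreover have "sqrt (\<Sum>j\<in>J. \<bar>u $ j\<bar>\<^sup>2) = norm u"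
  proof -
    have "(\<Sum>j\<in>J. \<bar>u $ j\<bar>\<^sup>2) = (\<Sum>j\<in>J. (u $ j)\<^sup>2)" by simp
    also have "\<dots> = (\<Sum>j\<in>UNIV. (u $ j)\<^sup>2)"
      by (rule sum.mono_neutral_left) (auto simp: J_def)
    finally have "(\<Sum>j\<in>J. \<bar>u $ j\<bar>\<^sup>2) = (\<Sum>j\<in>UNIV. (u $ j)\<^sup>2)" .
    then show ?thesis by (simp add: norm_vec_def L2_set_def)
  qed
  ultimately show ?thesis by simp
qed


lemma gauss_sq_mgf:
  assumes s: "s > 0" and q: "2 * l * s\<^sup>2 < 1"
  shows "(\<integral>\<^sup>+y. ennreal (normal_density 0 s y) * ennreal (exp (l * y\<^sup>2)) \<partial>lborel) = ennreal (1 / sqrt (1 - 2 * l * s\<^sup>2))"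
proof -
  define q where "q = 1 - 2 * l * s\<^sup>2"
  have qpos: "q > 0" using q by (simp add: q_def)
  define s' where "s' = s / sqrt q"
  have eq: "normal_density 0 s y * exp (l * y\<^sup>2) = (1 / sqrt q) * normal_density 0 s' y" for y
  proof -
    have s2: "s'\<^sup>2 = s\<^sup>2 / q" using qpos by (simp add: s'_def power_divide)
    have e1: "- (y - 0)\<^sup>2 / (2 * s'\<^sup>2) = - y\<^sup>2 * q / (2 * s\<^sup>2)"
      unfolding s2 using qpos s by (simp add: field_simps)
    have e2: "sqrt (2 * pi * s'\<^sup>2) = sqrt (2 * pi * s\<^sup>2) / sqrt q"
      unfolding s2 using qpos by (simp add: real_sqrt_divide)
    have a: "normal_density 0 s' y = sqrt q / sqrt (2 * pi * s\<^sup>2) * exp (- y\<^sup>2 * q / (2 * s\<^sup>2))"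
      unfolding normal_density_def e1 e2 using qpos s by simp
    have b: "- y\<^sup>2 * q / (2 * s\<^sup>2) = - y\<^sup>2 / (2 * s\<^sup>2) + l * y\<^sup>2"
      using s by (simp add: q_def field_simps)
    have c: "normal_density 0 s y = 1 / sqrt (2 * pi * s\<^sup>2) * exp (- y\<^sup>2 / (2 * s\<^sup>2))"
      by (simp add: normal_density_def)
    show ?thesis
      using qpos s unfolding a b c exp_add
      by (simp add: field_simps)
  qed
  have "(\<integral>\<^sup>+y. ennreal (normal_density 0 s y) * ennreal (exp (l * y\<^sup>2)) \<partial>lborel)
      = (\<integral>\<^sup>+y. ennreal (1 / sqrt q) * ennreal (normal_density 0 s' y) \<partial>lborel)"
    by (rule nn_integral_cong)
       (metis eq ennreal_mult' ennreal_mult'' normal_density_nonneg exp_ge_zero)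
  also have "\<dots> = ennreal (1 / sqrt q) * (\<integral>\<^sup>+y. ennreal (normal_density 0 s' y) \<partial>lborel)"
    by (rule nn_integral_cmult) simp
  also have "(\<integral>\<^sup>+y. ennreal (normal_density 0 s' y) \<partial>lborel) = 1"
    using qpos s by (subst nn_integral_eq_integral) (auto simp: s'_def normal_density_nonneg)
  finally show ?thesis by (simp add: q_def)
qed


lemma row_mgf:
  fixes u :: "real ^ 'n"
  assumes u: "u \<noteq> 0" and q: "2 * l * (norm u)\<^sup>2 < 1" and i: "i < d"
  shows "(\<integral>\<^sup>+A. ennreal (exp (l * (\<Sum>j\<in>UNIV. A (i, j) * u $ j)\<^sup>2)) \<partial>gauss_matrix d)
     = ennreal (1 / sqrt (1 - 2 * l * (norm u)\<^sup>2))"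
proof -
  let ?K = "{..<d} \<times> (UNIV :: 'n set)"
  let ?C = "PiM (UNIV :: 'n set) (\<lambda>_. std_gauss)"
  let ?g = "\<lambda>B::'n \<Rightarrow> real. ennreal (exp (l * (\<Sum>j\<in>UNIV. B j * u $ j)\<^sup>2))"
  have dis: "distr (PiM ?K (\<lambda>_. std_gauss)) ?C (\<lambda>\<omega>. \<lambda>n\<in>UNIV. \<omega> (i, n)) = ?C"
    using distr_PiM_reindex[of ?K "\<lambda>_. std_gauss" "\<lambda>j. (i, j)" UNIV] i
    by (auto simp: prob_space_std_gauss inj_on_def)
  have mg: "?g \<in> borel_measurable ?C"
  proof -
    have "(\<lambda>B::'n \<Rightarrow> real. \<Sum>j\<in>UNIV. B j * u $ j) \<in> borel_measurable (PiM UNIV (\<lambda>_. borel))"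
      by measurable
    then have "(\<lambda>B::'n \<Rightarrow> real. \<Sum>j\<in>UNIV. B j * u $ j) \<in> borel_measurable ?C"
      by (subst measurable_cong_sets[OF sets_PiM_cong refl]) auto
    then show ?thesis by measurable
  qed
  have mmap: "(\<lambda>\<omega>. \<lambda>n\<in>UNIV. \<omega> (i, n)) \<in> measurable (PiM ?K (\<lambda>_. std_gauss)) ?C"
    using i by (intro measurable_restrict) (auto intro: measurable_component_singleton)
  have "(\<integral>\<^sup>+A. ennreal (exp (l * (\<Sum>j\<in>UNIV. A (i, j) * u $ j)\<^sup>2)) \<partial>gauss_matrix d)
      = (\<integral>\<^sup>+A. ?g (\<lambda>n\<in>UNIV. A (i, n)) \<partial>PiM ?K (\<lambda>_. std_gauss))"
    unfolding gauss_matrix_def by simp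
  also have "\<dots> = (\<integral>\<^sup>+B. ?g B \<partial>distr (PiM ?K (\<lambda>_. std_gauss)) ?C (\<lambda>\<omega>. \<lambda>n\<in>UNIV. \<omega> (i, n)))"
    by (rule nn_integral_distr[symmetric, OF mmap]) (subst measurable_cong_sets[OF sets_distr refl], rule mg)
  also have "\<dots> = (\<integral>\<^sup>+B. ?g B \<partial>?C)" by (simp only: dis)
  also have "\<dots> = (\<integral>\<^sup>+y. ennreal (normal_density 0 (norm u) y) * ennreal (exp (l * y\<^sup>2)) \<partial>lborel)"
    by (rule distributed_nn_integral[OF col_sum_normal[OF u], symmetric]) measurable
  also have "\<dots> = ennreal (1 / sqrt (1 - 2 * l * (norm u)\<^sup>2))"
    by (rule gauss_sq_mgf) (use u q in auto)
  finally show ?thesis .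
qed


definition FF :: "nat \<Rightarrow> real ^ 'n \<Rightarrow> (nat \<times> 'n::finite \<Rightarrow> real) \<Rightarrow> real" where
  "FF d u A = (\<Sum>i<d. (\<Sum>j\<in>UNIV. A (i, j) * u $ j)\<^sup>2)"

lemma rows_indep:
  fixes u :: "real ^ 'n"
  shows "prob_space.indep_vars (gauss_matrix d) (\<lambda>_. borel)
           (\<lambda>i A. ennreal (exp (l * (\<Sum>j\<in>UNIV. A (i, j) * u $ j)\<^sup>2))) {..<d}"
proof -
  let ?K = "{..<d} \<times> (UNIV :: 'n set)"
  interpret P: prob_space "gauss_matrix d :: (nat \<times> 'n \<Rightarrow> real) measure" by (rule prob_space_gauss_matrix)
  have ind0: "P.indep_vars (\<lambda>_. borel) (\<lambda>k A. A k) ?K"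
    unfolding gauss_matrix_def by (rule indep_coords) simp
  have ind1: "P.indep_vars (\<lambda>i. PiM ({i} \<times> (UNIV::'n set)) (\<lambda>_. borel)) (\<lambda>i \<omega>. restrict \<omega> ({i} \<times> (UNIV::'n set))) {..<d}"
  proof -
    have a: "\<And>j. j \<in> {..<d} \<Longrightarrow> {j} \<times> (UNIV::'n set) \<subseteq> ?K" by auto
    have b: "disjoint_family_on (\<lambda>i. {i} \<times> (UNIV::'n set)) {..<d}"
      by (auto simp: disjoint_family_on_def)
    show ?thesis using P.indep_vars_restrict[OF ind0 a b] by simp
  qed
  have meas: "(\<lambda>B. ennreal (exp (l * (\<Sum>j\<in>UNIV. B (i, j) * u $ j)\<^sup>2))) \<in> borel_measurable (PiM ({i} \<times> UNIV) (\<lambda>_. borel))"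
    for i
  proof -
    have "\<And>j. (\<lambda>B. B (i, j)) \<in> borel_measurable (PiM ({i} \<times> (UNIV::'n set)) (\<lambda>_. borel))"
      by (rule measurable_component_singleton) simp
    then show ?thesis by measurable
  qed
  have ind2: "P.indep_vars (\<lambda>_. borel)
      (\<lambda>i \<omega>. ennreal (exp (l * (\<Sum>j\<in>UNIV. (restrict \<omega> ({i} \<times> UNIV)) (i, j) * u $ j)\<^sup>2))) {..<d}"
    by (rule P.indep_vars_compose2[OF ind1, where Y="\<lambda>i B. ennreal (exp (l * (\<Sum>j\<in>UNIV. B (i, j) * u $ j)\<^sup>2))"])
       (rule meas)
  show ?thesis
    using ind2 by simp
qed

lemma mgf:
  fixes u :: "real ^ 'n"
  assumes u: "u \<noteq> 0" and q: "2 * l * (norm u)\<^sup>2 < 1"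
  shows "(\<integral>\<^sup>+A. ennreal (exp (l * FF d u A)) \<partial>gauss_matrix d)
     = ennreal ((1 / sqrt (1 - 2 * l * (norm u)\<^sup>2)) ^ d)"
proof -
  interpret P: prob_space "gauss_matrix d :: (nat \<times> 'n \<Rightarrow> real) measure" by (rule prob_space_gauss_matrix)
  have "(\<integral>\<^sup>+A. ennreal (exp (l * FF d u A)) \<partial>gauss_matrix d)
      = (\<integral>\<^sup>+A. (\<Prod>i<d. ennreal (exp (l * (\<Sum>j\<in>UNIV. A (i, j) * u $ j)\<^sup>2))) \<partial>gauss_matrix d)"
    by (simp add: FF_def sum_distrib_left exp_sum prod_ennreal)
  also have "\<dots> = (\<Prod>i<d. \<integral>\<^sup>+A. ennreal (exp (l * (\<Sum>j\<in>UNIV. A (i, j) * u $ j)\<^sup>2)) \<partial>gauss_matrix d)"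
    by (rule P.indep_vars_nn_integral[OF _ rows_indep]) auto
  also have "\<dots> = (\<Prod>i<d. ennreal (1 / sqrt (1 - 2 * l * (norm u)\<^sup>2)))"
    by (rule prod.cong) (auto intro!: row_mgf u q)
  also have "\<dots> = ennreal ((1 / sqrt (1 - 2 * l * (norm u)\<^sup>2)) ^ d)"
    using q by (simp add: ennreal_power)
  finally show ?thesis .
qed


lemma chernoff:
  assumes P: "prob_space M" and f: "f \<in> borel_measurable M" and t: "t > 0"
    and mg: "(\<integral>\<^sup>+x. ennreal (exp (t * f x)) \<partial>M) = ennreal B"
  shows "measure M {x\<in>space M. a \<le> f x} \<le> B * exp (- t * a)"
proof -
  interpret prob_space M by (rule P)
  let ?S = "{x\<in>space M. a \<le> f x}"
  have Bnn: "B \<ge> 0"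
  proof (rule ccontr)
    assume "\<not> B \<ge> 0"
    then have "ennreal B = 0" by (simp add: ennreal_eq_0_iff)
    then have "(\<integral>\<^sup>+x. ennreal (exp (t * f x)) \<partial>M) = 0" using mg by simp
    then have "AE x in M. ennreal (exp (t * f x)) = 0"
      by (subst (asm) nn_integral_0_iff_AE) (use f in auto)
    then have "AE x in M. False" by simp
    then show False by simp
  qed
  have "emeasure M ?S = (\<integral>\<^sup>+x. indicator ?S x \<partial>M)"
    by (rule nn_integral_indicator[symmetric]) (use f in measurable)
  also have "\<dots> \<le> (\<integral>\<^sup>+x. ennreal (exp (- t * a)) * ennreal (exp (t * f x)) \<partial>M)"
  proof (rule nn_integral_mono)
    fix x assume "x \<in> space M"
    show "indicator ?S x \<le> ennreal (exp (- t * a)) * ennreal (exp (t * f x))"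
    proof (cases "x \<in> ?S")
      case True
      then have "a \<le> f x" by auto
      have "exp (- t * a) * exp (t * f x) = exp (t * (f x - a))"
        by (simp add: mult_exp_exp algebra_simps)
      moreover have "0 \<le> t * (f x - a)" using t \<open>a \<le> f x\<close> by simp
      ultimately have "1 \<le> exp (- t * a) * exp (t * f x)" by simp
      then show ?thesis using True by (simp add: ennreal_mult'[symmetric] del: ennreal_mult')
    qed simp
  qed
  also have "\<dots> = ennreal (exp (- t * a)) * ennreal B"
    by (subst nn_integral_cmult) (use f mg in auto)
  also have "\<dots> = ennreal (B * exp (- t * a))"
    using Bnn by (simp add: ennreal_mult'[symmetric] mult.commute)
  finally have "emeasure M ?S \<le> ennreal (B * exp (- t * a))" .
  then show ?thesis
    using Bnn by (simp add: emeasure_eq_measure)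
qed

lemma FF_meas: "FF d u \<in> borel_measurable (gauss_matrix d)"
proof -
  have "FF d u \<in> borel_measurable (PiM ({..<d} \<times> UNIV) (\<lambda>_. borel))"
    unfolding FF_def by measurable
  then show ?thesis
    by (subst measurable_cong_sets[OF sets_gauss_matrix refl])
qed

lemma upper_tail:
  fixes u :: "real ^ 'n"
  assumes u: "u \<noteq> 0"
  shows "measure (gauss_matrix d) {A\<in>space (gauss_matrix d). 4 * (norm u)\<^sup>2 * d \<le> FF d u A} \<le> exp (- 0.8 * d)"
proof -
  define s where "s = (norm u)\<^sup>2"
  have s: "s > 0" using u by (simp add: s_def)
  define t where "t = 3 / (8 * s)"
  have t: "t > 0" using s by (simp add: t_def)
  have q: "2 * t * (norm u)\<^sup>2 < 1" using s by (simp add: t_def s_def[symmetric])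
  have mg: "(\<integral>\<^sup>+A. ennreal (exp (t * FF d u A)) \<partial>gauss_matrix d) = ennreal ((1 / sqrt (1 - 2 * t * (norm u)\<^sup>2)) ^ d)"
    by (rule mgf[OF u q])
  have e: "1 / sqrt (1 - 2 * t * (norm u)\<^sup>2) = 2"
  proof -
    have "t * (norm u)\<^sup>2 = 3/8" using s by (simp add: t_def s_def[symmetric])
    then have h: "1 - 2 * t * (norm u)\<^sup>2 = 1/4" by (simp add: algebra_simps)
    have "sqrt (1/4::real) = 1/2" by (simp add: real_sqrt_divide)
    then show ?thesis unfolding h by (simp only:) simp
  qed
  have "measure (gauss_matrix d) {A\<in>space (gauss_matrix d). 4 * (norm u)\<^sup>2 * d \<le> FF d u A}
      \<le> (1 / sqrt (1 - 2 * t * (norm u)\<^sup>2)) ^ d * exp (- t * (4 * (norm u)\<^sup>2 * d))"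
    by (rule chernoff[OF prob_space_gauss_matrix FF_meas t mg])
  also have "\<dots> = exp (d * (ln 2 - 3/2))"
  proof -
    have "(2::real) ^ d = exp (d * ln 2)" by (simp add: exp_of_nat_mult)
    moreover have "- t * (4 * (norm u)\<^sup>2 * d) = - 3/2 * d" using s by (simp add: t_def s_def[symmetric])
    ultimately show ?thesis unfolding e by (simp add: mult_exp_exp algebra_simps)
  qed
  also have "\<dots> \<le> exp (- 0.8 * d)"
  proof -
    have "ln 2 - 3/2 \<le> (- 0.8::real)" using ln2_le_25_over_36 by simp
    then have "d * (ln 2 - 3/2) \<le> d * (- 0.8)" by (intro mult_left_mono) auto
    then show ?thesis by (simp add: mult.commute)
  qed
  finally show ?thesis .
qed


lemma lower_tail:
  fixes u :: "real ^ 'n"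
  assumes u: "u \<noteq> 0" and b: "b > 0"
  shows "measure (gauss_matrix d) {A\<in>space (gauss_matrix d). FF d u A \<le> b * d}
     \<le> exp (d / 2 * (1 + ln (b / (norm u)\<^sup>2)))"
proof -
  interpret P: prob_space "gauss_matrix d :: (nat \<times> 'n \<Rightarrow> real) measure" by (rule prob_space_gauss_matrix)
  define s where "s = (norm u)\<^sup>2"
  have s: "s > 0" using u by (simp add: s_def)
  define \<beta> where "\<beta> = b / s"
  have \<beta>: "\<beta> > 0" using s b by (simp add: \<beta>_def)
  show ?thesis
  proof (cases "\<beta> \<ge> 1")
    case True
    have "measure (gauss_matrix d) {A\<in>space (gauss_matrix d). FF d u A \<le> b * d} \<le> 1"
      by (rule P.prob_le_1)
    also have "1 \<le> exp (d / 2 * (1 + ln (b / (norm u)\<^sup>2)))"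
      using True \<beta> by (simp add: \<beta>_def s_def[symmetric])
    finally show ?thesis .
  next
    case False
    define t where "t = (1 / \<beta> - 1) / (2 * s)"
    have t: "t > 0" using False \<beta> s by (simp add: t_def field_simps)
    have ts: "t * s = (1 / \<beta> - 1) / 2" using s by (simp add: t_def)
    have "0 < t * s" using t s by simp
    then have q: "2 * (- t) * (norm u)\<^sup>2 < 1" by (simp add: s_def[symmetric])
    have mg0: "(\<integral>\<^sup>+A. ennreal (exp ((- t) * FF d u A)) \<partial>gauss_matrix d) = ennreal ((1 / sqrt (1 - 2 * (- t) * (norm u)\<^sup>2)) ^ d)"
      by (rule mgf[OF u q])
    have mg: "(\<integral>\<^sup>+A. ennreal (exp (t * (- FF d u A))) \<partial>gauss_matrix d) = ennreal ((1 / sqrt (1 - 2 * (- t) * (norm u)\<^sup>2)) ^ d)"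
      using mg0 by simp
    have "measure (gauss_matrix d) {A\<in>space (gauss_matrix d). - (b * d) \<le> - FF d u A}
      \<le> (1 / sqrt (1 - 2 * (- t) * (norm u)\<^sup>2)) ^ d * exp (- t * (- (b * d)))"
      by (rule chernoff[OF prob_space_gauss_matrix _ t mg]) (use FF_meas in measurable)
    also have "\<dots> = exp (d / 2 * ln \<beta> + d / 2 * (1 - \<beta>))"
    proof -
      have h1: "1 - 2 * (- t) * (norm u)\<^sup>2 = 1 / \<beta>"
        using ts by (simp add: s_def[symmetric] algebra_simps)
      have h2: "1 / sqrt (1 / \<beta>) = exp (ln \<beta> / 2)"
        using \<beta> by (simp add: real_sqrt_divide exp_ln_iff ln_sqrt[symmetric])
      have h3: "(exp (ln \<beta> / 2)) ^ d = exp (d / 2 * ln \<beta>)"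
        by (simp add: exp_of_nat_mult[symmetric])
      have h4: "- t * (- (b * d)) = d / 2 * (1 - \<beta>)"
      proof -
        have "b = \<beta> * s" using s by (simp add: \<beta>_def)
        then have "t * b = (t * s) * \<beta>" by simp
        also have "\<dots> = (1 - \<beta>) / 2" unfolding ts using \<beta> by (simp add: field_simps)
        finally have "t * b = (1 - \<beta>) / 2" .
        have "- t * (- (b * d)) = (t * b) * d" by simp
        then show ?thesis unfolding \<open>t * b = (1 - \<beta>) / 2\<close> by simp
      qed
      show ?thesis unfolding h1 h2 h3 h4 by (simp add: mult_exp_exp)
    qed
    also have "\<dots> \<le> exp (d / 2 * (1 + ln (b / (norm u)\<^sup>2)))"
    proof -
      have "d / 2 * ln \<beta> + d / 2 * (1 - \<beta>) \<le> d / 2 * (1 + ln \<beta>)"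
        using \<beta> by (simp add: algebra_simps)
      then show ?thesis by (simp add: \<beta>_def s_def)
    qed
    finally show ?thesis by simp
  qed
qed


lemma arith_facts:
  fixes \<delta> \<eta> \<epsilon> :: real and d r :: nat
  assumes "0 < \<delta>" and "exp 1 * \<delta> < 1"
    and "\<eta> > 1"
    and dd: "real d = \<eta> * real r / log 2 (1 / (exp 1 * \<delta>))"
    and "\<epsilon> > 0"
    and "\<eta> / ln (1 / (exp 1 * \<delta>)) < \<epsilon>"
  defines "lam \<equiv> 2 * exp (- (1 + \<epsilon>) / \<eta>) * \<delta> powr (1 - (1 + \<epsilon>) / \<eta>)"
  shows "lam > 0"
    and "\<And>l. lam \<le> l \<Longrightarrow> real d / 2 * (1 + ln (4 * \<delta>\<^sup>2 / l\<^sup>2)) \<le> real d / 2 - (1 + \<epsilon>) * r * ln 2"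
    and "2 ^ r * exp (real d / 2 - (1 + \<epsilon>) * r * ln 2) \<le> exp (- 0.3 * \<epsilon> * real r)"
proof -
  define p where "p = (1 + \<epsilon>) / \<eta>"
  define L where "L = ln (1 / (exp 1 * \<delta>))"
  have Ld: "L = - 1 - ln \<delta>" using assms(1) by (simp add: L_def ln_div ln_mult)
  have Lpos: "L > 0" using assms(1,2) by (simp add: L_def)
  have ln2: "ln (2::real) > 0" by simp
  have lg: "log 2 (1 / (exp 1 * \<delta>)) = L / ln 2" by (simp add: log_def L_def)
  have dL: "real d * L = \<eta> * r * ln 2"
    unfolding dd lg using Lpos ln2 by (simp add: field_simps)
  have "- (1 + \<epsilon>) / \<eta> = - p" by (simp add: p_def minus_divide_left)
  then have lam: "lam = 2 * exp (- p) * \<delta> powr (1 - p)" by (simp add: lam_def p_def)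
  show lampos: "lam > 0" unfolding lam using assms(1) by simp
  have lnlam: "ln lam = ln 2 - p + (1 - p) * ln \<delta>"
    unfolding lam using assms(1) by (simp add: ln_mult ln_powr)
  show "real d / 2 * (1 + ln (4 * \<delta>\<^sup>2 / l\<^sup>2)) \<le> real d / 2 - (1 + \<epsilon>) * r * ln 2" if l: "lam \<le> l" for l
  proof -
    have lpos: "l > 0" using l lampos by simp
    have "ln (4 * \<delta>\<^sup>2 / l\<^sup>2) \<le> ln (4 * \<delta>\<^sup>2 / lam\<^sup>2)"
    proof -
      have "lam\<^sup>2 \<le> l\<^sup>2" using l lampos by (intro power_mono) auto
      then have "4 * \<delta>\<^sup>2 / l\<^sup>2 \<le> 4 * \<delta>\<^sup>2 / lam\<^sup>2"
        using lampos assms(1) lpos by (intro divide_left_mono) auto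
      then show ?thesis using lpos lampos assms(1) by (subst ln_le_cancel_iff) auto
    qed
    also have "ln (4 * \<delta>\<^sup>2 / lam\<^sup>2) = ln 4 + 2 * ln \<delta> - 2 * ln lam"
      using lampos assms(1) by (simp add: ln_div ln_mult ln_realpow)
    also have "\<dots> = - 2 * p * L"
    proof -
      have "ln (4::real) = 2 * ln 2" using ln_realpow[of 2 2] by simp
      then show ?thesis unfolding lnlam Ld by (simp add: algebra_simps)
    qed
    finally have "real d / 2 * (1 + ln (4 * \<delta>\<^sup>2 / l\<^sup>2)) \<le> real d / 2 * (1 - 2 * p * L)"
      by (intro mult_left_mono) auto
    also have "\<dots> = real d / 2 - p * (real d * L)" by (simp add: algebra_simps)
    also have "p * (real d * L) = (1 + \<epsilon>) * r * ln 2"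
      unfolding dL p_def using assms(3) by simp
    finally show ?thesis .
  qed
  have dle: "real d \<le> \<epsilon> * r * ln 2"
  proof -
    have "\<eta> / L < \<epsilon>" using assms(6) by (simp only: L_def)
    then have "\<eta> < \<epsilon> * L" using Lpos by (simp add: pos_divide_less_eq)
    then have "\<eta> * (r * ln 2) \<le> \<epsilon> * L * (r * ln 2)" by (intro mult_right_mono) auto
    then have "real d * L \<le> (\<epsilon> * r * ln 2) * L" using dL by (simp add: algebra_simps)
    then show ?thesis using Lpos by simp
  qed
  have "(2::real) ^ r = exp (r * ln 2)" by (simp add: exp_of_nat_mult)
  then have "2 ^ r * exp (real d / 2 - (1 + \<epsilon>) * r * ln 2) = exp (real d / 2 - \<epsilon> * r * ln 2)"
    by (simp add: mult_exp_exp algebra_simps)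
  also have "\<dots> \<le> exp (- 0.3 * \<epsilon> * real r)"
  proof -
    have "0.6 \<le> ln (2::real)" using ln2_ge_two_thirds by simp
    then have "\<epsilon> * r * 0.6 \<le> \<epsilon> * r * ln 2" using assms(5) by (intro mult_left_mono) auto
    then show ?thesis using dle by simp
  qed
  finally show "2 ^ r * exp (real d / 2 - (1 + \<epsilon>) * r * ln 2) \<le> exp (- 0.3 * \<epsilon> * real r)" .
qed


lemma mvn_sq: "(mat_vec_norm d A u)\<^sup>2 = FF d u A"
  unfolding mat_vec_norm_def FF_def by (simp add: sum_nonneg)

lemma FF_zero: "FF d 0 A = 0" by (simp add: FF_def)

theorem corollary1:
  fixes Q :: "(real ^ 'n) set" and r :: nat and E :: "real ^ 'n \<Rightarrow> nat"
    and D :: "nat \<Rightarrow> real ^ 'n" and \<delta> \<eta> \<epsilon> :: real and d :: nat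
  assumes "compact Q"
    and "is_compression_code Q r E D"
    and "\<delta> = distortion Q E D"
    and "0 < \<delta>" and "exp 1 * \<delta> < 1"
    and "\<eta> > 1"
    and "real d = \<eta> * real r / log 2 (1 / (exp 1 * \<delta>))"
    and "\<epsilon> > 0"
    and "\<eta> / ln (1 / (exp 1 * \<delta>)) < \<epsilon>"
    and "xo \<in> Q"
  shows "measure (gauss_matrix d)
           {A \<in> space (gauss_matrix d). \<exists>c \<in> argmin_set d A (codebook Q E D) xo.
              norm (c - xo) \<ge> 2 * exp (- (1 + \<epsilon>) / \<eta>) * \<delta> powr (1 - (1 + \<epsilon>) / \<eta>)}
         \<le> exp (- 0.8 * real d) + exp (- 0.3 * \<epsilon> * real r)"
proof -
  interpret P: prob_space "gauss_matrix d :: (nat \<times> 'n \<Rightarrow> real) measure" by (rule prob_space_gauss_matrix)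
  define lam where "lam = 2 * exp (- (1 + \<epsilon>) / \<eta>) * \<delta> powr (1 - (1 + \<epsilon>) / \<eta>)"
  note AF = arith_facts[OF assms(4,5,6,7,8,9), folded lam_def]
  define C where "C = codebook Q E D"
  define C' where "C' = {c\<in>C. lam \<le> norm (c - xo)}"
  define co where "co = D (E xo)"
  define v where "v = xo - co"
  define M where "M = (gauss_matrix d :: (nat \<times> 'n \<Rightarrow> real) measure)"
  have CD: "C \<subseteq> D ` {1..2^r}"
    using assms(2) by (auto simp: C_def codebook_def is_compression_code_def)
  have finC: "finite C" using CD finite_subset by blast
  have cardC': "card C' \<le> 2 ^ r"
  proof -
    have "card C' \<le> card C" using finC by (intro card_mono) (auto simp: C'_def)
    also have "\<dots> \<le> card (D ` {1..2^r})" using CD by (intro card_mono) auto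
    also have "\<dots> \<le> card {1..(2::nat)^r}" by (rule card_image_le) simp
    finally show ?thesis by simp
  qed
  have finC': "finite C'" using finC by (auto simp: C'_def)
  have coC: "co \<in> C" using assms(10) by (auto simp: C_def co_def codebook_def)
  have vle: "norm v \<le> \<delta>"
  proof -
    obtain R where R: "\<forall>x\<in>Q. norm x \<le> R"
      using compact_imp_bounded[OF assms(1)] by (auto simp: bounded_iff)
    obtain R2 where R2: "\<forall>y\<in>D ` {1..2^r}. norm y \<le> R2"
      using finite_imp_bounded[of "D ` {1..2^r}"] by (auto simp: bounded_iff)
    have "bdd_above ((\<lambda>x. norm (x - D (E x))) ` Q)"
    proof (rule bdd_aboveI2)
      fix x assume x: "x \<in> Q"
      have "D (E x) \<in> D ` {1..2^r}" using assms(2) x by (auto simp: is_compression_code_def)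
      then have "norm (D (E x)) \<le> R2" using R2 by blast
      then show "norm (x - D (E x)) \<le> R + R2" using R x norm_triangle_ineq4[of x "D (E x)"] by fastforce
    qed
    then show ?thesis unfolding v_def co_def assms(3) distortion_def
      by (rule cSUP_upper[OF assms(10)])
  qed
  define S1 where "S1 = {A\<in>space M. 4 * \<delta>\<^sup>2 * d < FF d v A}"
  define Sc where "Sc c = {A\<in>space M. FF d (xo - c) A \<le> (4 * \<delta>\<^sup>2) * d}" for c
  have sub: "{A \<in> space (gauss_matrix d). \<exists>c \<in> argmin_set d A (codebook Q E D) xo.
              norm (c - xo) \<ge> lam} \<subseteq> S1 \<union> (\<Union>c\<in>C'. Sc c)"
  proof
    fix A assume "A \<in> {A \<in> space (gauss_matrix d). \<exists>c \<in> argmin_set d A (codebook Q E D) xo. norm (c - xo) \<ge> lam}"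
    then obtain c where A: "A \<in> space M" and c: "c \<in> argmin_set d A C xo" and cl: "lam \<le> norm (c - xo)"
      by (auto simp: M_def C_def)
    have cC: "c \<in> C" and le: "FF d (xo - c) A \<le> FF d v A"
      using c coC by (auto simp: argmin_set_def mvn_sq v_def)
    have "c \<in> C'" using cC cl by (simp add: C'_def)
    then show "A \<in> S1 \<union> (\<Union>c\<in>C'. Sc c)"
    proof (cases "4 * \<delta>\<^sup>2 * d < FF d v A")
      case True then show ?thesis using A by (auto simp: S1_def)
    next
      case False
      then have "FF d (xo - c) A \<le> 4 * \<delta>\<^sup>2 * d" using le by linarith
      then have "A \<in> Sc c" using A by (simp add: Sc_def)
      then show ?thesis using \<open>c \<in> C'\<close> by blast
    qed
  qed
  have mS1: "S1 \<in> sets M" unfolding S1_def M_def using FF_meas by measurable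
  have mSc: "Sc c \<in> sets M" for c unfolding Sc_def M_def using FF_meas by measurable
  have PS1: "measure M S1 \<le> exp (- 0.8 * real d)"
  proof (cases "v = 0")
    case True
    have "\<And>A. \<not> 4 * \<delta>\<^sup>2 * d < FF d v A" using True by (simp add: FF_zero not_less)
    then have "S1 = {}" by (auto simp: S1_def)
    then show ?thesis by simp
  next
    case False
    have "S1 \<subseteq> {A\<in>space M. 4 * (norm v)\<^sup>2 * d \<le> FF d v A}"
    proof -
      have "4 * (norm v)\<^sup>2 * d \<le> 4 * \<delta>\<^sup>2 * d"
        using vle by (intro mult_right_mono mult_left_mono power_mono) auto
      then show ?thesis by (auto simp: S1_def)
    qed
    moreover have "{A\<in>space M. 4 * (norm v)\<^sup>2 * d \<le> FF d v A} \<in> sets M"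
      unfolding M_def using FF_meas by measurable
    ultimately have "measure M S1 \<le> measure M {A\<in>space M. 4 * (norm v)\<^sup>2 * d \<le> FF d v A}"
      unfolding M_def by (rule P.finite_measure_mono)
    also have "\<dots> \<le> exp (- 0.8 * real d)"
      unfolding M_def by (rule upper_tail[OF False])
    finally show ?thesis .
  qed
  have PSc: "measure M (Sc c) \<le> exp (real d / 2 - (1 + \<epsilon>) * r * ln 2)" if c: "c \<in> C'" for c
  proof -
    have cl: "lam \<le> norm (xo - c)" using c by (simp add: C'_def norm_minus_commute)
    have nz: "xo - c \<noteq> 0" using cl AF(1) by auto
    have "measure M (Sc c) \<le> exp (real d / 2 * (1 + ln (4 * \<delta>\<^sup>2 / (norm (xo - c))\<^sup>2)))"
      unfolding M_def Sc_def by (rule lower_tail[OF nz]) (use assms(4) in simp)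
    also have "\<dots> \<le> exp (real d / 2 - (1 + \<epsilon>) * r * ln 2)"
      using AF(2)[OF cl] by simp
    finally show ?thesis .
  qed
  have "measure M {A \<in> space (gauss_matrix d). \<exists>c \<in> argmin_set d A (codebook Q E D) xo. norm (c - xo) \<ge> lam}
      \<le> measure M (S1 \<union> (\<Union>c\<in>C'. Sc c))"
  proof -
    have "S1 \<union> (\<Union>c\<in>C'. Sc c) \<in> sets M"
      using mS1 mSc finC' by (intro sets.Un sets.finite_UN) auto
    then show ?thesis using sub unfolding M_def by (intro P.finite_measure_mono) auto
  qed
  also have "\<dots> \<le> measure M S1 + measure M (\<Union>c\<in>C'. Sc c)"
    using mS1 mSc finC' by (intro measure_Un_le) auto
  also have "measure M (\<Union>c\<in>C'. Sc c) \<le> (\<Sum>c\<in>C'. measure M (Sc c))"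
    using mSc finC' by (intro P.finite_measure_subadditive_finite[unfolded M_def[symmetric]]) auto
  also have "\<dots> \<le> (\<Sum>c\<in>C'. exp (real d / 2 - (1 + \<epsilon>) * r * ln 2))"
    by (intro sum_mono PSc)
  also have "\<dots> = card C' * exp (real d / 2 - (1 + \<epsilon>) * r * ln 2)" by simp
  also have "\<dots> \<le> 2 ^ r * exp (real d / 2 - (1 + \<epsilon>) * r * ln 2)"
  proof -
    have "real (card C') \<le> 2 ^ r" using cardC' by (metis of_nat_le_iff of_nat_numeral of_nat_power)
    then show ?thesis by (intro mult_right_mono) auto
  qed
  also have "\<dots> \<le> exp (- 0.3 * \<epsilon> * real r)" by (rule AF(3))
  finally show ?thesis using PS1 unfolding M_def lam_def by simp
qed

end
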